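(* Let $\sigma$ be a rank-one ruled submanifold. Then for every $t\in I$ the degree of the ruling distribution of $\sigma$ at $t$ is at most $1$. In particular, a noncylindrical rank-one submanifold is of degree one.
   Context: Ruled submanifold: given an open interval $I$, a smooth unit-speed curve $\gamma\colon I\to\mathbb{R}^{m+n}$ and smooth vector fields $X_{1},\dotsc,X_{m-1}$ along $\gamma$ that are orthonormal at each $t$, define $\sigma(t,u^{1},\dotsc,u^{m-1})=\gamma(t)+\sum_{j=1}^{m-1}u^{j}X_{j}(t)$ on $I\times\mathbb{R}^{m-1}$. A point is regular if $d\sigma$ is injective there. The ruling distribution is $\mathcal{D}_{t}=\operatorname{Span}(X_{j}(t))_{j=1}^{m-1}$. Define $\rho_{t}\colon\mathcal{D}_{t}\to\mathcal{D}_{t}^{\perp}$ by $\sum_{j}c_{j}X_{j}(t)\mapsto\sum_{j}c_{j}\pi^{\perp}\dot X_{j}(t)$, where $\pi^{\perp}$ is orthogonal projection onto $\mathcal{D}_{t}^{\perp}$. The degree of $\mathcal{D}$ at $t$ is $\operatorname{rank}\rho_{t}$. The submanifold $\sigma$ is noncylindrical if the degree is nonzero for every $t$, and of degree one if it equals $1$ for every $t$. A ruled submanifold is rank-one if at every regular point the kernel of its second fundamental form has dimension $m-1$. *)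

theory Defs
  imports "HOL-Analysis.Analysis"
begin

fun vderivs :: "nat \<Rightarrow> (real \<Rightarrow> 'a::real_normed_vector) \<Rightarrow> real \<Rightarrow> 'a" where
  "vderivs 0 f = f"
| "vderivs (Suc k) f = (\<lambda>t. vector_derivative (vderivs k f) (at t))"

definition smooth_curve_on :: "real set \<Rightarrow> (real \<Rightarrow> 'a::real_normed_vector) \<Rightarrow> bool" where
  "smooth_curve_on I f \<longleftrightarrow> (\<forall>k. \<forall>t\<in>I. vderivs k f differentiable (at t))"

definition open_interval :: "real set \<Rightarrow> bool" where
  "open_interval I \<longleftrightarrow> open I \<and> is_interval I \<and> I \<noteq> {}"

definition orth_proj :: "'a::euclidean_space set \<Rightarrow> 'a \<Rightarrow> 'a" where
  "orth_proj S v = (THE w. w \<in> S \<and> (\<forall>s\<in>S. (v - w) \<bullet> s = 0))"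

definition orth_proj_perp :: "'a::euclidean_space set \<Rightarrow> 'a \<Rightarrow> 'a" where
  "orth_proj_perp S v = v - orth_proj S v"

text \<open>Data of a ruled submanifold: open interval I, smooth unit-speed curve gamma,
  and smooth vector fields X j (j ranging over the finite index type 'k, of cardinality m-1)
  along gamma, orthonormal at each t.\<close>
definition ruled_data :: "real set \<Rightarrow> (real \<Rightarrow> 'a::euclidean_space) \<Rightarrow> ('k::finite \<Rightarrow> real \<Rightarrow> 'a) \<Rightarrow> bool" where
  "ruled_data I \<gamma> X \<longleftrightarrow>
     open_interval I \<and> smooth_curve_on I \<gamma> \<and>
     (\<forall>t\<in>I. norm (vector_derivative \<gamma> (at t)) = 1) \<and>
     (\<forall>j. smooth_curve_on I (X j)) \<and>
     (\<forall>t\<in>I. \<forall>i j. X i t \<bullet> X j t = (if i = j then 1 else 0))"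

definition ruled_map :: "(real \<Rightarrow> 'a::euclidean_space) \<Rightarrow> ('k::finite \<Rightarrow> real \<Rightarrow> 'a) \<Rightarrow> real \<times> (real^'k) \<Rightarrow> 'a" where
  "ruled_map \<gamma> X p = \<gamma> (fst p) + (\<Sum>j\<in>UNIV. (snd p $ j) *\<^sub>R X j (fst p))"

definition regular_point :: "('b::euclidean_space \<Rightarrow> 'a::euclidean_space) \<Rightarrow> 'b \<Rightarrow> bool" where
  "regular_point \<sigma> p \<longleftrightarrow> \<sigma> differentiable (at p) \<and> inj (frechet_derivative \<sigma> (at p))"

definition tangent_space :: "('b::euclidean_space \<Rightarrow> 'a::euclidean_space) \<Rightarrow> 'b \<Rightarrow> 'a set" where
  "tangent_space \<sigma> p = range (frechet_derivative \<sigma> (at p))"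

definition second_deriv :: "('b::euclidean_space \<Rightarrow> 'a::euclidean_space) \<Rightarrow> 'b \<Rightarrow> 'b \<Rightarrow> 'b \<Rightarrow> 'a" where
  "second_deriv \<sigma> p v w = frechet_derivative (\<lambda>q. frechet_derivative \<sigma> (at q) v) (at p) w"

text \<open>Second fundamental form at p, in coordinates: II(d sigma v, d sigma w) is the normal
  component of D^2 sigma_p (v, w).\<close>
definition sff :: "('b::euclidean_space \<Rightarrow> 'a::euclidean_space) \<Rightarrow> 'b \<Rightarrow> 'b \<Rightarrow> 'b \<Rightarrow> 'a" where
  "sff \<sigma> p v w = orth_proj_perp (tangent_space \<sigma> p) (second_deriv \<sigma> p v w)"

definition sff_kernel :: "('b::euclidean_space \<Rightarrow> 'a::euclidean_space) \<Rightarrow> 'b \<Rightarrow> 'a set" where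
  "sff_kernel \<sigma> p = frechet_derivative \<sigma> (at p) ` {v. \<forall>w. sff \<sigma> p v w = 0}"

text \<open>Rank-one: at every regular point (t,u) with t in I the kernel of the second fundamental
  form has dimension m - 1 = CARD('k).\<close>
definition rank_one_ruled :: "real set \<Rightarrow> (real \<Rightarrow> 'a::euclidean_space) \<Rightarrow> ('k::finite \<Rightarrow> real \<Rightarrow> 'a) \<Rightarrow> bool" where
  "rank_one_ruled I \<gamma> X \<longleftrightarrow>
     (\<forall>p. fst p \<in> I \<longrightarrow> regular_point (ruled_map \<gamma> X) p \<longrightarrow>
          dim (sff_kernel (ruled_map \<gamma> X) p) = CARD('k))"

definition ruling_dist :: "('k::finite \<Rightarrow> real \<Rightarrow> 'a::euclidean_space) \<Rightarrow> real \<Rightarrow> 'a set" where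
  "ruling_dist X t = span (range (\<lambda>j. X j t))"

definition rho :: "('k::finite \<Rightarrow> real \<Rightarrow> 'a::euclidean_space) \<Rightarrow> real \<Rightarrow> 'a \<Rightarrow> 'a" where
  "rho X t v = (\<Sum>j\<in>UNIV. (v \<bullet> X j t) *\<^sub>R
                   orth_proj_perp (ruling_dist X t) (vector_derivative (X j) (at t)))"

definition ruling_degree :: "('k::finite \<Rightarrow> real \<Rightarrow> 'a::euclidean_space) \<Rightarrow> real \<Rightarrow> nat" where
  "ruling_degree X t = dim (rho X t ` ruling_dist X t)"

definition noncylindrical :: "real set \<Rightarrow> ('k::finite \<Rightarrow> real \<Rightarrow> 'a::euclidean_space) \<Rightarrow> bool" where
  "noncylindrical I X \<longleftrightarrow> (\<forall>t\<in>I. ruling_degree X t \<noteq> 0)"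

definition degree_one :: "real set \<Rightarrow> ('k::finite \<Rightarrow> real \<Rightarrow> 'a::euclidean_space) \<Rightarrow> bool" where
  "degree_one I X \<longleftrightarrow> (\<forall>t\<in>I. ruling_degree X t = 1)"

end

theory Submission
  imports Defs
begin


lemma orth_proj_unique:
  fixes S :: "'a::euclidean_space set"
  assumes "subspace S" "w \<in> S" "\<forall>s\<in>S. (v - w) \<bullet> s = 0"
  shows "orth_proj S v = w"
proof -
  have ex: "\<exists>w. w \<in> S \<and> (\<forall>s\<in>S. (v - w) \<bullet> s = 0)" using assms(2,3) by blast
  have un: "w1 = w2" if "w1 \<in> S" "\<forall>s\<in>S. (v - w1) \<bullet> s = 0" "w2 \<in> S" "\<forall>s\<in>S. (v - w2) \<bullet> s = 0" for w1 w2
  proof -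
    have d: "w1 - w2 \<in> S" using that assms(1) by (simp add: subspace_diff)
    have "(v - w2) \<bullet> (w1 - w2) - (v - w1) \<bullet> (w1 - w2) = 0" using that d by simp
    hence "(w1 - w2) \<bullet> (w1 - w2) = 0" by (simp add: inner_diff_left inner_diff_right inner_commute)
    thus ?thesis by simp
  qed
  show ?thesis unfolding orth_proj_def
    apply (rule the_equality) using assms un by blast+
qed

lemma orth_proj_props:
  fixes S :: "'a::euclidean_space set"
  assumes "subspace S"
  shows "orth_proj S v \<in> S \<and> (\<forall>s\<in>S. (v - orth_proj S v) \<bullet> s = 0)"
proof -
  obtain y z where y: "y \<in> span S" and z: "\<And>w. w \<in> span S \<Longrightarrow> orthogonal z w" and v: "v = y + z"
    using orthogonal_subspace_decomp_exists by blast
  have yS: "y \<in> S" using y assms by (metis span_eq_iff)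
  have "\<forall>s\<in>S. (v - y) \<bullet> s = 0" using z v by (simp add: orthogonal_def span_base)
  with orth_proj_unique[OF assms yS this] yS show ?thesis by simp
qed

lemma linear_orth_proj:
  fixes S :: "'a::euclidean_space set"
  assumes "subspace S"
  shows "linear (orth_proj S)"
proof
  fix x y
  let ?P = "orth_proj S"
  show "?P (x + y) = ?P x + ?P y"
    apply (rule orth_proj_unique[OF assms])
    using orth_proj_props[OF assms, of x] orth_proj_props[OF assms, of y] assms
    by (auto simp: subspace_add inner_diff_left inner_add_left algebra_simps)
next
  fix c x
  let ?P = "orth_proj S"
  show "?P (c *\<^sub>R x) = c *\<^sub>R ?P x"
    apply (rule orth_proj_unique[OF assms])
    using orth_proj_props[OF assms, of x] assms
    by (auto simp: subspace_scale inner_diff_left algebra_simps)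
qed

lemma linear_orth_proj_perp:
  fixes S :: "'a::euclidean_space set"
  assumes "subspace S"
  shows "linear (orth_proj_perp S)"
  unfolding orth_proj_perp_def[abs_def]
  using linear_orth_proj[OF assms] by (intro linear_compose_sub linear_ident)

lemma orth_proj_perp_zero_iff:
  fixes S :: "'a::euclidean_space set"
  assumes "subspace S"
  shows "orth_proj_perp S v = 0 \<longleftrightarrow> v \<in> S"
proof
  assume "orth_proj_perp S v = 0"
  hence "v = orth_proj S v" by (simp add: orth_proj_perp_def)
  thus "v \<in> S" using orth_proj_props[OF assms] by metis
next
  assume "v \<in> S"
  hence "orth_proj S v = v" by (intro orth_proj_unique[OF assms]) auto
  thus "orth_proj_perp S v = 0" by (simp add: orth_proj_perp_def)
qed



lemma vd_comp_fst:
  fixes f :: "real \<Rightarrow> 'a::real_normed_vector" and p :: "real \<times> 'b::real_normed_vector"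
  assumes "f differentiable (at (fst p))"
  shows "((\<lambda>q. f (fst q)) has_derivative (\<lambda>w. fst w *\<^sub>R vector_derivative f (at (fst p)))) (at p)"
proof -
  have "(f has_derivative (\<lambda>s. s *\<^sub>R vector_derivative f (at (fst p)))) (at (fst p))"
    using assms vector_derivative_works has_vector_derivative_def by blast
  from has_derivative_compose[OF has_derivative_fst[OF has_derivative_ident] this] show ?thesis by simp
qed

lemma nth_snd_deriv:
  "((\<lambda>q::real \<times> (real^'k). snd q $ j) has_derivative (\<lambda>w. snd w $ j)) (at p)"
  by (rule bounded_linear_imp_has_derivative)
     (rule bounded_linear_compose[OF bounded_linear_vec_nth bounded_linear_snd])

definition DS :: "(real \<Rightarrow> 'a::euclidean_space) \<Rightarrow> ('k::finite \<Rightarrow> real \<Rightarrow> 'a) \<Rightarrow> real \<times> (real^'k) \<Rightarrow> real \<times> (real^'k) \<Rightarrow> 'a" where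
  "DS \<gamma> X q v = fst v *\<^sub>R (vector_derivative \<gamma> (at (fst q)) + (\<Sum>j\<in>UNIV. snd q $ j *\<^sub>R vector_derivative (X j) (at (fst q))))
      + (\<Sum>j\<in>UNIV. snd v $ j *\<^sub>R X j (fst q))"

lemma deriv_sigma:
  fixes \<gamma> :: "real \<Rightarrow> 'a::euclidean_space" and X :: "'k::finite \<Rightarrow> real \<Rightarrow> 'a"
  assumes "\<gamma> differentiable (at (fst p))" "\<And>j. X j differentiable (at (fst p))"
  shows "(ruled_map \<gamma> X has_derivative DS \<gamma> X p) (at p)"
proof -
  have "((\<lambda>q. \<gamma> (fst q) + (\<Sum>j\<in>UNIV. snd q $ j *\<^sub>R X j (fst q))) has_derivative
     (\<lambda>w. fst w *\<^sub>R vector_derivative \<gamma> (at (fst p)) + (\<Sum>j\<in>UNIV. snd p $ j *\<^sub>R (fst w *\<^sub>R vector_derivative (X j) (at (fst p))) + snd w $ j *\<^sub>R X j (fst p)))) (at p)"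
    by (intro has_derivative_add has_derivative_sum has_derivative_scaleR vd_comp_fst nth_snd_deriv assms)
  then show ?thesis unfolding ruled_map_def[abs_def] DS_def
    by (rule has_derivative_eq_rhs) (auto simp: fun_eq_iff sum.distrib scaleR_sum_right algebra_simps)
qed

definition D2 :: "(real \<Rightarrow> 'a::euclidean_space) \<Rightarrow> ('k::finite \<Rightarrow> real \<Rightarrow> 'a) \<Rightarrow> real \<times> (real^'k) \<Rightarrow> real \<times> (real^'k) \<Rightarrow> real \<times> (real^'k) \<Rightarrow> 'a" where
  "D2 \<gamma> X p v w = fst v *\<^sub>R (fst w *\<^sub>R vector_derivative (\<lambda>s. vector_derivative \<gamma> (at s)) (at (fst p))
      + (\<Sum>j\<in>UNIV. snd p $ j *\<^sub>R (fst w *\<^sub>R vector_derivative (\<lambda>s. vector_derivative (X j) (at s)) (at (fst p))) + snd w $ j *\<^sub>R vector_derivative (X j) (at (fst p))))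
      + (\<Sum>j\<in>UNIV. snd v $ j *\<^sub>R (fst w *\<^sub>R vector_derivative (X j) (at (fst p))))"

lemma deriv_DS:
  fixes \<gamma> :: "real \<Rightarrow> 'a::euclidean_space" and X :: "'k::finite \<Rightarrow> real \<Rightarrow> 'a"
  assumes "(\<lambda>s. vector_derivative \<gamma> (at s)) differentiable (at (fst p))"
    "\<And>j. (\<lambda>s. vector_derivative (X j) (at s)) differentiable (at (fst p))"
    "\<And>j. X j differentiable (at (fst p))"
  shows "((\<lambda>q. DS \<gamma> X q v) has_derivative D2 \<gamma> X p v) (at p)"
  unfolding DS_def[abs_def] D2_def[abs_def]
  by (intro has_derivative_add has_derivative_sum has_derivative_scaleR has_derivative_const
       has_derivative_scaleR_right vd_comp_fst[where f="\<lambda>s. vector_derivative _ (at s)", simplified] 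
       vd_comp_fst nth_snd_deriv assms)

lemma sum_axis: "(\<Sum>j\<in>UNIV. axis k (1::real) $ j *\<^sub>R f j) = (f k :: 'a::real_vector)"
proof -
  have "(\<Sum>j\<in>UNIV. axis k (1::real) $ j *\<^sub>R f j) = (\<Sum>j\<in>UNIV. (if k = j then f j else 0))"
    by (rule sum.cong) (auto simp: axis_def)
  thus ?thesis by simp
qed

lemma smooth01:
  assumes "smooth_curve_on I f" "t \<in> I"
  shows "f differentiable (at t)" "(\<lambda>s. vector_derivative f (at s)) differentiable (at t)"
proof -
  have "vderivs 0 f differentiable (at t)" "vderivs (Suc 0) f differentiable (at t)"
    using assms unfolding smooth_curve_on_def by blast+
  thus "f differentiable (at t)" "(\<lambda>s. vector_derivative f (at s)) differentiable (at t)"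
    by simp_all
qed

lemma subspace_ruling: "subspace (ruling_dist X t)"
  unfolding ruling_dist_def by simp

lemma dim_S1: "dim (range (\<lambda>c::real^'k. (0::real, c))) = CARD('k)"
proof -
  have l: "linear (\<lambda>c::real^'k. (0::real, c))"
    by (rule linearI) auto
  have "inj (\<lambda>c::real^'k. (0::real, c))" by (auto simp: inj_def)
  from dim_image_eq[OF l, of UNIV] this have "dim (range (\<lambda>c::real^'k. (0::real, c))) = dim (UNIV :: (real^'k) set)"
    by (metis inj_on_subset top_greatest)
  thus ?thesis by simp
qed



lemma degree_le1:
  fixes \<gamma> :: "real \<Rightarrow> 'a::euclidean_space" and X :: "'k::finite \<Rightarrow> real \<Rightarrow> 'a"
  assumes rd: "ruled_data I \<gamma> X" and r1: "rank_one_ruled I \<gamma> X" and tI: "t \<in> I"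
  shows "ruling_degree X t \<le> 1"
proof -
  have oI: "open I" using rd by (simp add: ruled_data_def open_interval_def)
  have sg: "smooth_curve_on I \<gamma>" and sX: "\<And>j. smooth_curve_on I (X j)"
    and orth: "\<And>i j. X i t \<bullet> X j t = (if i = j then 1 else 0)"
    using rd tI by (auto simp: ruled_data_def)
  note dg = smooth01[OF sg] and dX = smooth01[OF sX]
  define D where "D = ruling_dist X t"
  have sD: "subspace D" unfolding D_def by (rule subspace_ruling)
  have XD: "X j t \<in> D" for j unfolding D_def ruling_dist_def by (rule span_base) auto
  have lD: "linear (orth_proj_perp D)" by (rule linear_orth_proj_perp[OF sD])
  have pX: "orth_proj_perp D (X j t) = 0" for j using orth_proj_perp_zero_iff[OF sD] XD by blast
  define Y where "Y j = vector_derivative (X j) (at t)" for j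
  define V where "V u = vector_derivative \<gamma> (at t) + (\<Sum>j\<in>UNIV. u $ j *\<^sub>R Y j)" for u :: "real^'k"
  show ?thesis
  proof (cases "\<forall>u. V u \<in> D")
    case True
    have "Y j \<in> D" for j
    proof -
      have "Y j = V (axis j 1) - V 0" by (simp add: V_def sum_axis)
      thus ?thesis using True sD by (simp add: subspace_diff)
    qed
    hence "orth_proj_perp D (Y j) = 0" for j using orth_proj_perp_zero_iff[OF sD] by blast
    hence "rho X t v = 0" for v unfolding rho_def D_def[symmetric] Y_def[symmetric] by simp
    hence "rho X t ` ruling_dist X t \<subseteq> span {}" by auto
    hence "dim (rho X t ` ruling_dist X t) \<le> card ({}::'a set)"
      by (intro dim_le_card) auto
    thus ?thesis unfolding ruling_degree_def by (simp only: card.empty)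
  next
    case False
    then obtain u where Vu: "V u \<notin> D" by blast
    define p where "p = (t, u)"
    let ?\<sigma> = "ruled_map \<gamma> X"
    have ft: "fst p = t" by (simp add: p_def)
    have hd: "(?\<sigma> has_derivative DS \<gamma> X p) (at p)"
      by (rule deriv_sigma) (use dg dX tI ft in auto)
    have fd: "frechet_derivative ?\<sigma> (at p) = DS \<gamma> X p" using frechet_derivative_at[OF hd] by simp
    have lin: "linear (DS \<gamma> X p)" using has_derivative_linear[OF hd] .
    have DSp: "DS \<gamma> X p z = fst z *\<^sub>R V u + (\<Sum>j\<in>UNIV. snd z $ j *\<^sub>R X j t)" for z
      by (simp add: DS_def p_def V_def Y_def)
    have pDS: "orth_proj_perp D (DS \<gamma> X p z) = fst z *\<^sub>R orth_proj_perp D (V u)" for z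
      unfolding DSp using lD by (simp add: linear_add linear_scale linear_sum pX)
    have pVu: "orth_proj_perp D (V u) \<noteq> 0" using Vu orth_proj_perp_zero_iff[OF sD] by blast
    have inj: "inj (DS \<gamma> X p)"
      unfolding linear_inj_iff_eq_0[OF lin]
    proof (intro allI impI)
      fix z assume z0: "DS \<gamma> X p z = 0"
      have "fst z *\<^sub>R orth_proj_perp D (V u) = 0" using pDS[of z] z0 lD by (simp add: linear_0)
      hence s0: "fst z = 0" using pVu by simp
      hence sum0: "(\<Sum>j\<in>UNIV. snd z $ j *\<^sub>R X j t) = 0" using z0 DSp[of z] by simp
      have "snd z $ k = 0" for k
      proof -
        have "(\<Sum>j\<in>UNIV. snd z $ j *\<^sub>R X j t) \<bullet> X k t = (\<Sum>j\<in>UNIV. snd z $ j * (X j t \<bullet> X k t))"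
          by (simp add: inner_sum_left)
        also have "\<dots> = (\<Sum>j\<in>UNIV. if j = k then snd z $ j else 0)"
          by (rule sum.cong) (auto simp: orth)
        also have "\<dots> = snd z $ k" by simp
        finally show ?thesis using sum0 by simp
      qed
      thus "z = 0" using s0 by (simp add: prod_eq_iff vec_eq_iff)
    qed
    have reg: "regular_point ?\<sigma> p"
      unfolding regular_point_def fd using hd inj differentiable_def by blast
    have dimK: "dim (sff_kernel ?\<sigma> p) = CARD('k)"
      using r1 reg tI ft unfolding rank_one_ruled_def by blast
    define T where "T = range (DS \<gamma> X p)"
    have sT: "subspace T" unfolding T_def by (rule linear_subspace_image[OF lin subspace_UNIV])
    have lT: "linear (orth_proj_perp T)" by (rule linear_orth_proj_perp[OF sT])
    have ts: "tangent_space ?\<sigma> p = T" by (simp add: tangent_space_def fd T_def)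
    have sd: "second_deriv ?\<sigma> p v w = D2 \<gamma> X p v w" for v w
    proof -
      have "((\<lambda>q. DS \<gamma> X q v) has_derivative D2 \<gamma> X p v) (at p)"
        by (rule deriv_DS) (use dg dX tI ft in auto)
      hence "((\<lambda>q. frechet_derivative ?\<sigma> (at q) v) has_derivative D2 \<gamma> X p v) (at p)"
      proof (rule has_derivative_transform_within_open[where s="I \<times> UNIV"])
        show "open (I \<times> (UNIV :: (real^'k) set))" using oI by (simp add: open_Times)
        show "p \<in> I \<times> UNIV" using tI p_def by simp
        fix q :: "real \<times> (real^'k)" assume "q \<in> I \<times> UNIV"
        hence "fst q \<in> I" by auto
        hence "(?\<sigma> has_derivative DS \<gamma> X q) (at q)"
          by (intro deriv_sigma) (use dg dX in auto)
        thus "DS \<gamma> X q v = frechet_derivative ?\<sigma> (at q) v" using frechet_derivative_at by metis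
      qed
      thus ?thesis unfolding second_deriv_def using frechet_derivative_at by metis
    qed
    have YT: "Y j \<in> T" for j
    proof (rule ccontr)
      assume nY: "Y j \<notin> T"
      define b where "b i = orth_proj_perp T (Y i)" for i
      have bj: "b j \<noteq> 0" unfolding b_def using nY orth_proj_perp_zero_iff[OF sT] by simp
      define K where "K = {v. \<forall>w. sff ?\<sigma> p v w = 0}"
      define S0 where "S0 = {v :: real \<times> (real^'k). fst v = 0 \<and> (\<Sum>i\<in>UNIV. snd v $ i *\<^sub>R b i) = 0}"
      define S1 where "S1 = range (\<lambda>c::real^'k. (0::real, c))"
      have KS0: "K \<subseteq> S0"
      proof
        fix v assume "v \<in> K"
        hence vk0: "\<forall>w. orth_proj_perp T (D2 \<gamma> X p v w) = 0"
          unfolding K_def sff_def ts sd by simp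
        hence vk: "orth_proj_perp T (D2 \<gamma> X p v w) = 0" for w by blast
        have "D2 \<gamma> X p v (0, axis j 1) = fst v *\<^sub>R Y j"
          by (simp add: D2_def sum_axis Y_def p_def)
        with vk[of "(0, axis j 1)"] have "fst v *\<^sub>R b j = 0"
          using lT by (simp add: b_def linear_scale)
        hence f0: "fst v = 0" using bj by simp
        have "D2 \<gamma> X p v (1, 0) = (\<Sum>i\<in>UNIV. snd v $ i *\<^sub>R Y i)"
          by (simp add: D2_def Y_def p_def f0)
        with vk[of "(1, 0)"] have "(\<Sum>i\<in>UNIV. snd v $ i *\<^sub>R b i) = 0"
          using lT by (simp add: b_def linear_scale linear_sum)
        thus "v \<in> S0" using f0 by (simp add: S0_def)
      qed
      have sS0: "subspace S0" unfolding S0_def subspace_def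
      proof (intro conjI allI ballI)
        fix c :: real and x assume "x \<in> {v :: real \<times> (real^'k). fst v = 0 \<and> (\<Sum>i\<in>UNIV. snd v $ i *\<^sub>R b i) = 0}"
        moreover have "(\<Sum>i\<in>UNIV. (c * snd x $ i) *\<^sub>R b i) = c *\<^sub>R (\<Sum>i\<in>UNIV. snd x $ i *\<^sub>R b i)"
          by (simp add: scaleR_sum_right)
        ultimately show "c *\<^sub>R x \<in> {v :: real \<times> (real^'k). fst v = 0 \<and> (\<Sum>i\<in>UNIV. snd v $ i *\<^sub>R b i) = 0}"
          by simp
      qed (auto simp: scaleR_add_left sum.distrib)
      have sS1: "subspace S1" unfolding S1_def
        by (rule linear_subspace_image[OF _ subspace_UNIV]) (rule linearI, auto)
      have "S0 \<subseteq> S1" unfolding S0_def S1_def by (auto simp: image_iff prod_eq_iff)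
      moreover have "(0, axis j 1) \<in> S1" unfolding S1_def by auto
      moreover have "(0, axis j 1) \<notin> S0" unfolding S0_def using bj by (simp add: sum_axis)
      moreover have e0: "span S0 = S0" using sS0 span_eq_iff by blast
      moreover have e1: "span S1 = S1" using sS1 span_eq_iff by blast
      ultimately have "span S0 \<subset> span S1" by blast
      hence "dim S0 < dim S1" by (rule dim_psubset)
      hence lt: "dim S0 < CARD('k)" using dim_S1[where 'k='k] unfolding S1_def by simp
      have "dim (sff_kernel ?\<sigma> p) \<le> dim K"
        unfolding sff_kernel_def fd K_def by (rule dim_image_le[OF lin])
      also have "\<dots> \<le> dim S0" by (rule dim_subset[OF KS0])
      finally show False using lt dimK by simp
    qed
    have "\<forall>j. \<exists>z. Y j = DS \<gamma> X p z" using YT unfolding T_def by (auto simp: image_iff)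
    then obtain zz where zz0: "\<forall>j. Y j = DS \<gamma> X p (zz j)" by (rule exE[OF choice])
    hence zz: "\<And>j. Y j = DS \<gamma> X p (zz j)" by blast
    let ?w = "orth_proj_perp D (V u)"
    have "rho X t v = (\<Sum>j\<in>UNIV. ((v \<bullet> X j t) * fst (zz j))) *\<^sub>R ?w" for v
      unfolding rho_def D_def[symmetric] Y_def[symmetric]
      by (simp add: zz pDS scaleR_sum_left)
    hence "rho X t ` ruling_dist X t \<subseteq> span {?w}" by (auto intro: span_mul span_base)
    from dim_le_card[OF this finite_insert[THEN iffD2, OF finite.emptyI]] show ?thesis unfolding ruling_degree_def by simp
  qed
qed

theorem mainTheorem6:
  fixes I :: "real set" and \<gamma> :: "real \<Rightarrow> 'a::euclidean_space"
    and X :: "'k::finite \<Rightarrow> real \<Rightarrow> 'a"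
  assumes "ruled_data I \<gamma> X"
    and "rank_one_ruled I \<gamma> X"
  shows "(\<forall>t\<in>I. ruling_degree X t \<le> 1) \<and> (noncylindrical I X \<longrightarrow> degree_one I X)"
  using degree_le1[OF assms] unfolding noncylindrical_def degree_one_def
  by (metis le_antisym less_one not_le)

end
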